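(* Let $m\ge 2$ and let $T$ be any hierarchy of size $m$. Let $H^{(m)}(x)=\sum_{n\ge1}H^{(m)}_nx^n$, where $H^{(m)}_n$ is the number of isomorphism classes of hierarchies of size $n$ that do not contain a subhierarchy isomorphic to $T$, and let $\rho_m$ be the radius of convergence of $H^{(m)}(x)$. Then the limit of $H^{(m)}(x)$ as $x\to\rho_m$ from the left exists (and is finite) and equals $\sum_{n=1}^{\infty}H^{(m)}_n\rho_m^n$.
   Context: A hierarchy is a finite rooted unordered tree in which no vertex has exactly one child; its size is its number of leaves. For a vertex $v$ of a hierarchy, the subhierarchy at $v$ is the hierarchy induced by $v$ and all its descendants (with root $v$); a hierarchy contains $T$ as a subhierarchy if the subhierarchy at some vertex (possibly the root) is isomorphic to $T$ as a rooted tree. *)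

theory Defs
  imports "HOL-Analysis.Analysis" "HOL-Library.Multiset"
begin

text \<open>Finite rooted unordered trees, up to isomorphism: a node is given by the
multiset of its children. Equality of htree values is exactly rooted-tree
isomorphism.\<close>
datatype htree = Node "htree multiset"

primrec is_hier :: "htree \<Rightarrow> bool" where
  "is_hier (Node M) = (size M \<noteq> 1 \<and> (\<forall>b\<in>#image_mset is_hier M. b))"

text \<open>Number of leaves (the size of a hierarchy).\<close>
primrec leaves :: "htree \<Rightarrow> nat" where
  "leaves (Node M) = (if M = {#} then 1 else sum_mset (image_mset leaves M))"

primrec subtrees :: "htree \<Rightarrow> htree set" where
  "subtrees (Node M) = insert (Node M) (\<Union>(set_mset (image_mset subtrees M)))"

definition contains_sub :: "htree \<Rightarrow> htree \<Rightarrow> bool" where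
  "contains_sub t T \<longleftrightarrow> T \<in> subtrees t"

definition avoid_count :: "htree \<Rightarrow> nat \<Rightarrow> nat" where
  "avoid_count T n = card {t. is_hier t \<and> leaves t = n \<and> \<not> contains_sub t T}"

text \<open>Coefficients H_n (with H_0 = 0, the series starts at n = 1).\<close>
definition Hcoef :: "htree \<Rightarrow> nat \<Rightarrow> real" where
  "Hcoef T n = (if n = 0 then 0 else real (avoid_count T n))"

end

theory Submission imports Defs begin

lemma leaves_pos: "leaves t \<ge> 1"
proof (induction t)
  case (Node M)
  show ?case
  proof (cases "M = {#}")
    case False
    then obtain x M' where M: "M = add_mset x M'" by (metis multiset_cases)
    have "leaves x \<ge> 1" using Node M by auto
    then show ?thesis using M by simp
  qed simp
qed

lemma leaves_add: "leaves (Node (add_mset a M)) = leaves a + (if M = {#} then 0 else leaves (Node M))"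
  by simp

primrec kids :: "htree \<Rightarrow> htree multiset" where "kids (Node M) = M"

definition leaf :: htree where "leaf = Node {#}"

definition HS :: "nat \<Rightarrow> htree set" where "HS N = {t. is_hier t \<and> leaves t \<le> N}"

definition f2 :: "htree \<times> htree \<Rightarrow> htree" where "f2 p = Node {#fst p, snd p#}"
definition f3 :: "htree \<times> htree \<Rightarrow> htree" where "f3 p = Node (add_mset (fst p) (kids (snd p)))"

lemma HS_Suc: "HS (Suc N) \<subseteq> insert leaf (f2 ` (HS N \<times> HS N) \<union> f3 ` (HS N \<times> (HS N - {leaf})))"
proof
  fix t assume t: "t \<in> HS (Suc N)"
  obtain M where tM: "t = Node M" by (cases t)
  show "t \<in> insert leaf (f2 ` (HS N \<times> HS N) \<union> f3 ` (HS N \<times> (HS N - {leaf})))"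
  proof (cases "M = {#}")
    case True then show ?thesis using tM by (simp add: leaf_def)
  next
    case False
    then obtain a M' where M: "M = add_mset a M'" by (metis multiset_cases)
    have hM: "size M \<noteq> 1" "\<forall>x\<in>#M. is_hier x" using t tM by (auto simp: HS_def)
    have M'ne: "M' \<noteq> {#}" using hM M by auto
    have lt: "leaves t = leaves a + leaves (Node M')" using tM M M'ne by simp
    have la: "leaves a \<le> N" using lt t leaves_pos[of "Node M'"] by (simp add: HS_def)
    have lr: "leaves (Node M') \<le> N" using lt t leaves_pos[of a] by (simp add: HS_def)
    have ha: "a \<in> HS N" using la hM M by (simp add: HS_def)
    show ?thesis
    proof (cases "size M' = 1")
      case True
      then obtain b where "M' = {#b#}" by (metis size_1_singleton_mset)
      then have "t = f2 (a, b)" "b \<in> HS N" using tM M hM lr by (auto simp: f2_def HS_def)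
      then show ?thesis using ha by blast
    next
      case False
      have "Node M' \<in> HS N - {leaf}" using False lr hM M M'ne by (auto simp: HS_def leaf_def)
      moreover have "t = f3 (a, Node M')" using tM M by (simp add: f3_def)
      ultimately show ?thesis using ha by blast
    qed
  qed
qed

lemma finite_HS: "finite (HS N)"
proof (induction N)
  case 0
  have "leaves t \<noteq> 0" for t using leaves_pos[of t] by linarith
  then have "HS 0 = {}" by (auto simp: HS_def)
  then show ?case by simp
next
  case (Suc N)
  show ?case using Suc by (intro finite_subset[OF HS_Suc]) auto
qed

lemma sum_prod_w:
  fixes g :: "htree \<Rightarrow> real"
  shows "(\<Sum>p\<in>A \<times> B. g (fst p) * g (snd p)) = sum g A * sum g B"
  by (simp add: sum_product sum.cartesian_product case_prod_beta)

lemma u_rec: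
  fixes x :: real assumes x: "0 \<le> x"
  shows "(\<Sum>t\<in>HS (Suc N). x ^ leaves t) \<le> x + 2 * (\<Sum>t\<in>HS N. x ^ leaves t)^2"
proof -
  let ?w = "\<lambda>t. x ^ leaves t"
  let ?A = "HS N \<times> HS N" and ?B = "HS N \<times> (HS N - {leaf})"
  have fA: "finite ?A" "finite ?B" using finite_HS by auto
  have "sum ?w (HS (Suc N)) \<le> sum ?w (insert leaf (f2 ` ?A \<union> f3 ` ?B))"
    by (rule sum_mono2) (use HS_Suc fA x in auto)
  also have "\<dots> \<le> ?w leaf + sum ?w (f2 ` ?A \<union> f3 ` ?B)"
    using fA x by (simp add: sum.insert_if)
  also have "\<dots> \<le> ?w leaf + (sum ?w (f2 ` ?A) + sum ?w (f3 ` ?B))"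
    using fA x by (simp add: sum_Un sum_nonneg)
  also have "sum ?w (f2 ` ?A) \<le> sum (?w \<circ> f2) ?A"
    by (rule sum_image_le) (use fA x in auto)
  also have "sum (?w \<circ> f2) ?A = (\<Sum>p\<in>?A. ?w (fst p) * ?w (snd p))"
    by (rule sum.cong) (auto simp: f2_def power_add)
  also have "sum ?w (f3 ` ?B) \<le> sum (?w \<circ> f3) ?B"
    by (rule sum_image_le) (use fA x in auto)
  also have "sum (?w \<circ> f3) ?B = (\<Sum>p\<in>?B. ?w (fst p) * ?w (snd p))"
  proof (rule sum.cong)
    fix p assume "p \<in> ?B"
    then obtain a r where p: "p = (a, r)" "r \<noteq> leaf" by auto
    obtain K where r: "r = Node K" by (cases r)
    have "K \<noteq> {#}" using p r by (auto simp: leaf_def)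
    then show "(?w \<circ> f3) p = ?w (fst p) * ?w (snd p)" using p r by (simp add: f3_def power_add)
  qed simp
  also have "(\<Sum>p\<in>?B. ?w (fst p) * ?w (snd p)) \<le> (\<Sum>p\<in>?A. ?w (fst p) * ?w (snd p))"
    by (rule sum_mono2) (use fA x in auto)
  finally show ?thesis by (simp add: sum_prod_w[of "\<lambda>t. x ^ leaves t"] leaf_def power2_eq_square)
qed

lemma u_bound: "(\<Sum>t\<in>HS N. (1/16::real) ^ leaves t) \<le> 1/8"
proof (induction N)
  case 0
  have "leaves t \<noteq> 0" for t using leaves_pos[of t] by linarith
  then have "HS 0 = {}" by (auto simp: HS_def)
  then show ?case by simp
next
  case (Suc N)
  have nn: "0 \<le> (\<Sum>t\<in>HS N. (1/16::real) ^ leaves t)" by (simp add: sum_nonneg)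
  have "(\<Sum>t\<in>HS N. (1/16::real) ^ leaves t)^2 \<le> (1/8)^2"
    using Suc nn by (intro power_mono) auto
  then have "(\<Sum>t\<in>HS N. (1/16::real) ^ leaves t)^2 \<le> 1/64" by (simp add: power2_eq_square)
  then show ?case using u_rec[of "1/16" N] by linarith
qed

lemma card2_le: "card {x, y} \<le> 2"
  by (simp add: card_insert_if)

lemma pair_mset_eq: "{#c, d#} = {#a, b#} \<Longrightarrow> (c = a \<and> d = b) \<or> (c = b \<and> d = a)"
  by (auto simp: add_eq_conv_diff)

definition AS :: "htree \<Rightarrow> nat \<Rightarrow> htree set" where
  "AS T N = {t \<in> HS N. \<not> contains_sub t T}"

lemma finite_AS: "finite (AS T N)"
  unfolding AS_def by (rule finite_subset[OF _ finite_HS[of N]]) auto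

lemma Psum: "(\<Sum>n\<le>N. Hcoef T n * x ^ n) = (\<Sum>t\<in>AS T N. x ^ leaves t)"
proof -
  have "(\<Sum>t\<in>AS T N. x ^ leaves t) = (\<Sum>n\<le>N. \<Sum>t\<in>{t. t \<in> AS T N \<and> leaves t = n}. x ^ leaves t)"
    by (rule sum.group[symmetric, OF finite_AS]) (auto simp: AS_def HS_def)
  also have "\<dots> = (\<Sum>n\<le>N. Hcoef T n * x ^ n)"
  proof (rule sum.cong)
    fix n assume n: "n \<in> {..N}"
    have eq: "{t. t \<in> AS T N \<and> leaves t = n} = {t. is_hier t \<and> leaves t = n \<and> \<not> contains_sub t T}"
      using n by (auto simp: AS_def HS_def)
    have "leaves t \<noteq> 0" for t using leaves_pos[of t] by linarith
    then have e0: "{t. is_hier t \<and> leaves t = 0 \<and> \<not> contains_sub t T} = {}" by auto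
    show "(\<Sum>t\<in>{t. t \<in> AS T N \<and> leaves t = n}. x ^ leaves t) = Hcoef T n * x ^ n"
      unfolding eq by (auto simp: Hcoef_def avoid_count_def e0)
  qed simp
  finally show ?thesis ..
qed

lemma pair_bound:
  fixes x :: real assumes x: "0 \<le> x" "x \<le> 1"
  shows "(\<Sum>t\<in>AS T N. x ^ leaves t)^2 - (\<Sum>t\<in>AS T N. x ^ leaves t)
         \<le> 2 * (\<Sum>t\<in>AS T (2*N). x ^ leaves t) + 2"
proof -
  let ?w = "\<lambda>t. x ^ leaves t"
  let ?A = "AS T N \<times> AS T N"
  let ?Dg = "(\<lambda>a. (a, a)) ` AS T N"
  let ?D = "?A - ?Dg"
  have fA: "finite ?A" "finite ?D" using finite_AS by auto
  have w01: "0 \<le> ?w t" "?w t \<le> 1" for t using x by (auto simp: power_le_one)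
  have e1: "(\<Sum>p\<in>?D. ?w (fst p) * ?w (snd p)) = (\<Sum>p\<in>?A. ?w (fst p) * ?w (snd p)) - (\<Sum>p\<in>?Dg. ?w (fst p) * ?w (snd p))"
    by (rule sum_diff) (use fA in auto)
  have e2: "(\<Sum>p\<in>?Dg. ?w (fst p) * ?w (snd p)) = (\<Sum>a\<in>AS T N. ?w a * ?w a)"
    by (subst sum.reindex) (auto simp: inj_on_def)
  have e3: "(\<Sum>a\<in>AS T N. ?w a * ?w a) \<le> sum ?w (AS T N)"
    by (rule sum_mono) (use w01 in \<open>auto intro: mult_left_le\<close>)
  have e4: "(\<Sum>p\<in>?A. ?w (fst p) * ?w (snd p)) = (sum ?w (AS T N))^2"
    by (simp add: sum_prod_w[of ?w] power2_eq_square)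
  have 1: "(sum ?w (AS T N))^2 - sum ?w (AS T N) \<le> (\<Sum>p\<in>?D. ?w (fst p) * ?w (snd p))"
    using e1 e2 e3 e4 by linarith
  have 2: "(\<Sum>p\<in>?D. ?w (fst p) * ?w (snd p)) = (\<Sum>p\<in>?D. ?w (f2 p))"
    by (rule sum.cong) (auto simp: f2_def power_add)
  have 3: "(\<Sum>p\<in>?D. ?w (f2 p)) \<le> (\<Sum>y\<in>f2 ` ?D. 2 * ?w y)"
  proof -
    have "(\<Sum>p\<in>?D. ?w (f2 p)) = (\<Sum>y\<in>f2 ` ?D. \<Sum>p\<in>{p. p \<in> ?D \<and> f2 p = y}. ?w (f2 p))"
      by (rule sum.image_gen) (use fA in auto)
    also have "\<dots> \<le> (\<Sum>y\<in>f2 ` ?D. 2 * ?w y)"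
    proof (rule sum_mono)
      fix y assume "y \<in> f2 ` ?D"
      then obtain p where p: "p \<in> ?D" "y = f2 p" by blast
      obtain a b where "p = (a, b)" by fastforce
      then have y: "y = Node {#a, b#}" using p by (simp only: f2_def fst_conv snd_conv)
      have sub: "{p. p \<in> ?D \<and> f2 p = y} \<subseteq> {(a,b),(b,a)}"
      proof
        fix q assume q: "q \<in> {p. p \<in> ?D \<and> f2 p = y}"
        obtain c d where cd: "q = (c, d)" by fastforce
        have "f2 (c, d) = y" using q cd by blast
        then have "Node {#c, d#} = Node {#a, b#}" using y by (simp only: f2_def fst_conv snd_conv)
        then have "{#c, d#} = {#a, b#}" by (simp only: htree.inject)
        then have "(c = a \<and> d = b) \<or> (c = b \<and> d = a)" by (rule pair_mset_eq)
        then show "q \<in> {(a,b),(b,a)}" using cd by auto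
      qed
      have "card {p. p \<in> ?D \<and> f2 p = y} \<le> card {(a,b),(b,a)}"
        by (rule card_mono[OF _ sub]) simp
      also have "\<dots> \<le> 2" by (rule card2_le)
      finally have c: "card {p. p \<in> ?D \<and> f2 p = y} \<le> 2" .
      have "(\<Sum>p\<in>{p. p \<in> ?D \<and> f2 p = y}. ?w (f2 p)) = (\<Sum>p\<in>{p. p \<in> ?D \<and> f2 p = y}. ?w y)"
        by (rule sum.cong) auto
      also have "\<dots> = real (card {p. p \<in> ?D \<and> f2 p = y}) * ?w y" by simp
      also have "\<dots> \<le> 2 * ?w y" using c w01[of y] by (intro mult_right_mono) auto
      finally show "(\<Sum>p\<in>{p. p \<in> ?D \<and> f2 p = y}. ?w (f2 p)) \<le> 2 * ?w y" .
    qed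
    finally show ?thesis .
  qed
  have img: "f2 ` ?D \<subseteq> insert T (AS T (2*N))"
  proof
    fix y assume "y \<in> f2 ` ?D"
    then obtain p where p: "p \<in> ?D" "y = f2 p" by blast
    obtain a b where pab: "p = (a, b)" by fastforce
    have ab: "a \<in> AS T N" "b \<in> AS T N" "a \<noteq> b" using p pab by auto
    have y: "y = Node {#a, b#}" using p pab by (simp only: f2_def fst_conv snd_conv)
    show "y \<in> insert T (AS T (2*N))"
    proof (cases "y = T")
      case False
      then show ?thesis using ab y by (auto simp: AS_def HS_def contains_sub_def)
    qed simp
  qed
  have fI: "finite (insert T (AS T (2*N)))" using finite_AS by simp
  have "(\<Sum>y\<in>f2 ` ?D. 2 * ?w y) \<le> (\<Sum>y\<in>insert T (AS T (2*N)). 2 * ?w y)"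
    by (rule sum_mono2[OF fI img]) (use w01 in auto)
  also have "\<dots> \<le> 2 * ?w T + (\<Sum>y\<in>AS T (2*N). 2 * ?w y)"
    using finite_AS w01 by (simp add: sum.insert_if)
  also have "\<dots> \<le> 2 + 2 * (\<Sum>y\<in>AS T (2*N). ?w y)"
    using w01[of T] by (simp add: sum_distrib_left)
  finally show ?thesis using 1 2 3 by linarith
qed


definition star :: "nat \<Rightarrow> htree" where "star k = Node (replicate_mset k leaf)"

lemma star_facts:
  assumes "k \<ge> 2"
  shows "is_hier (star k)" "leaves (star k) = k" "subtrees (star k) = {star k, leaf}"
  using assms by (auto simp: star_def leaf_def)

lemma Hcoef_ge1:
  assumes "leaves T = m" "m \<ge> 2" "n \<ge> 2" "n \<noteq> m"
  shows "1 \<le> Hcoef T n"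
proof -
  let ?S = "{t. is_hier t \<and> leaves t = n \<and> \<not> contains_sub t T}"
  have "T \<noteq> star n" using star_facts(2)[of n] assms by auto
  moreover have "T \<noteq> leaf" using assms by (auto simp: leaf_def)
  ultimately have "star n \<in> ?S" using star_facts[of n] assms by (auto simp: contains_sub_def)
  moreover have "finite ?S" by (rule finite_subset[OF _ finite_HS[of n]]) (auto simp: HS_def)
  ultimately have "card ?S \<ge> 1"
    by (metis (no_types, lifting) One_nat_def Suc_leI card_gt_0_iff empty_iff)
  then show ?thesis using assms by (simp add: Hcoef_def avoid_count_def)
qed

lemma Hcoef_nonneg: "0 \<le> Hcoef T n" by (simp add: Hcoef_def)

theorem lemma3p4:
  fixes T :: htree and m :: nat
  assumes "m \<ge> 2" and "is_hier T" and "leaves T = m"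
  shows "\<exists>\<rho>::real. conv_radius (Hcoef T) = ereal \<rho> \<and> 0 < \<rho> \<and>
           (\<exists>L::real. ((\<lambda>x. \<Sum>n. Hcoef T n * x ^ n) \<longlongrightarrow> L) (at_left \<rho>) \<and>
                       (\<lambda>n. Hcoef T n * \<rho> ^ n) sums L)"
proof -
  let ?a = "Hcoef T"
  define P where "P N x = (\<Sum>n\<le>N. ?a n * x ^ n)" for N and x :: real
  have Pnn: "0 \<le> P N x" if "0 \<le> x" for N x
    unfolding P_def using that by (intro sum_nonneg) (simp add: Hcoef_nonneg)
  have lt_le: "(\<Sum>i<n. ?a i * x ^ i) \<le> P n x" if "0 \<le> x" for n x
    unfolding P_def using that by (intro sum_mono2) (auto simp: Hcoef_nonneg)
  have "summable (\<lambda>n. ?a n * (1/16::real) ^ n)"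
  proof (rule summableI_nonneg_bounded)
    show "0 \<le> ?a n * (1/16::real) ^ n" for n by (simp add: Hcoef_nonneg)
    fix n
    have "P n (1/16) = (\<Sum>t\<in>AS T n. (1/16::real) ^ leaves t)" unfolding P_def by (rule Psum)
    also have "\<dots> \<le> (\<Sum>t\<in>HS n. (1/16::real) ^ leaves t)"
      by (rule sum_mono2[OF finite_HS]) (auto simp: AS_def)
    also have "\<dots> \<le> 1/8" by (rule u_bound)
    finally show "(\<Sum>i<n. ?a i * (1/16::real) ^ i) \<le> 1/8" using lt_le[of "1/16" n] by simp
  qed
  then have r1: "ereal (1/16) \<le> conv_radius ?a" using conv_radius_geI by fastforce
  have "\<not> summable (\<lambda>n. norm (?a n * (1::real) ^ n))"
  proof
    assume "summable (\<lambda>n. norm (?a n * (1::real) ^ n))"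
    then have "(\<lambda>n. norm (?a n * (1::real) ^ n)) \<longlonglongrightarrow> 0" by (rule summable_LIMSEQ_zero)
    then have "eventually (\<lambda>n. norm (?a n * (1::real) ^ n) < 1) sequentially"
      by (rule order_tendstoD) simp
    then obtain N where N: "\<And>n. n \<ge> N \<Longrightarrow> norm (?a n * (1::real) ^ n) < 1"
      by (auto simp: eventually_sequentially)
    have "1 \<le> ?a (N + m + 2)" using assms by (intro Hcoef_ge1) auto
    then show False using N[of "N + m + 2"] by simp
  qed
  then have r2: "conv_radius ?a \<le> ereal 1" using conv_radius_leI by fastforce
  define \<rho> where "\<rho> = real_of_ereal (conv_radius ?a)"
  have cr: "conv_radius ?a = ereal \<rho>" and rho: "1/16 \<le> \<rho>" "\<rho> \<le> 1"
    using r1 r2 unfolding \<rho>_def by (cases "conv_radius ?a"; simp)+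
  have rpos: "0 < \<rho>" using rho by simp
  have below: "P N x \<le> 4" if x: "0 \<le> x" "x < \<rho>" for N x
  proof -
    have sm: "summable (\<lambda>n. ?a n * x ^ n)"
      by (rule summable_in_conv_radius) (use x cr in simp)
    define H where "H = (\<Sum>n. ?a n * x ^ n)"
    have PH: "P N x \<le> H" for N
      unfolding P_def H_def using x by (intro sum_le_suminf[OF sm]) (auto simp: Hcoef_nonneg)
    have sq: "(P N x)^2 \<le> 3 * H + 2" for N
    proof -
      have "(P N x)^2 - P N x \<le> 2 * P (2*N) x + 2"
        using pair_bound[of x T N] x rho unfolding P_def Psum by simp
      then show ?thesis using PH[of N] PH[of "2*N"] by linarith
    qed
    have lim: "(\<lambda>N. P N x) \<longlonglongrightarrow> H" unfolding P_def H_def by (rule summable_LIMSEQ'[OF sm])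
    have "H^2 \<le> 3 * H + 2"
      by (rule LIMSEQ_le_const2[OF tendsto_power[OF lim]]) (use sq in blast)
    then have H4: "H \<le> 4"
    proof -
      assume h: "H^2 \<le> 3 * H + 2"
      show "H \<le> 4"
      proof (rule ccontr)
        assume "\<not> H \<le> 4"
        then have "4 * H \<le> H * H" by (intro mult_right_mono) auto
        moreover have "H * H \<le> 3 * H + 2" using h by (simp add: power2_eq_square)
        ultimately show False using \<open>\<not> H \<le> 4\<close> by linarith
      qed
    qed
    show ?thesis using PH[of N] H4 by linarith
  qed
  have atr: "P N \<rho> \<le> 4" for N
  proof (rule tendsto_upperbound)
    show "((\<lambda>x. P N x) \<longlongrightarrow> P N \<rho>) (at_left \<rho>)"
      unfolding P_def by (intro tendsto_intros)
    show "\<forall>\<^sub>F x in at_left \<rho>. P N x \<le> 4"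
      using eventually_at_left_real[OF rpos] by eventually_elim (auto intro: below)
    show "\<not> trivial_limit (at_left \<rho>)" by simp
  qed
  have smr: "summable (\<lambda>n. ?a n * \<rho> ^ n)"
  proof (rule summableI_nonneg_bounded)
    show "0 \<le> ?a n * \<rho> ^ n" for n using rpos by (simp add: Hcoef_nonneg)
    show "(\<Sum>i<n. ?a i * \<rho> ^ i) \<le> 4" for n using lt_le[of \<rho> n] atr[of n] rpos by simp
  qed
  have ul: "uniform_limit {0..\<rho>} (\<lambda>n x. \<Sum>i<n. ?a i * x ^ i) (\<lambda>x. \<Sum>i. ?a i * x ^ i) sequentially"
  proof (rule Weierstrass_m_test[OF _ smr])
    fix n and x :: real assume "x \<in> {0..\<rho>}"
    then have "0 \<le> x" "x \<le> \<rho>" by auto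
    then show "norm (?a n * x ^ n) \<le> ?a n * \<rho> ^ n"
      by (auto simp: Hcoef_nonneg abs_mult intro!: mult_left_mono power_mono)
  qed
  have "continuous_on {0..\<rho>} (\<lambda>x. \<Sum>i. ?a i * x ^ i)"
    by (rule uniform_limit_theorem[OF _ ul]) (auto intro!: always_eventually continuous_intros)
  then have "((\<lambda>x. \<Sum>i. ?a i * x ^ i) \<longlongrightarrow> (\<Sum>i. ?a i * \<rho> ^ i)) (at_left \<rho>)"
    using rpos by (rule continuous_on_Icc_at_leftD)
  then show ?thesis using cr rpos summable_sums[OF smr] by blast
qed

end
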